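(* Assume (A1)–(A4). Suppose $g(x_1)\le-\alpha$ for some $\alpha\in(0,\epsilon]$. Run the Algorithm with $\rho=\alpha/\sqrt{T}$ and $\eta=\frac{\xi\rho}{G_fG_g}$. Then $$\mathrm{Reg}_T\le\Big(\frac{2G_fG_gR^2}{\xi\alpha}+\frac{G_f\xi\alpha}{2G_g}+\frac{G_f\alpha}{\sigma}\Big)\sqrt{T},$$ and $g(x_t)\le0$ for all $t\in[T]$.
   Context: Let $d,T$ be positive integers and $[T]=\{1,\dots,T\}$. Write $\|\cdot\|$ for the Euclidean norm and $\mathbb{B}=\{x\in\mathbb{R}^d:\|x\|\le1\}$. For a closed convex set $\mathcal{Y}$, $\Pi_{\mathcal{Y}}$ is the Euclidean projection onto $\mathcal{Y}$. For $a\in\mathbb{R}$, $[a]_+=\max(a,0)$. Let $g:\mathbb{R}^d\to\mathbb{R}$ be convex with subdifferential $\partial g(x)$, and set $\mathcal{X}=\{x:g(x)\le0\}$. Assumptions: (A1) there is $R>0$ with $\mathcal{X}\subseteq R\mathbb{B}$; (A2) $f_1,\dots,f_T:\mathbb{R}^d\to\mathbb{R}$ are convex and differentiable, and there is $G_f>0$ with $\|\nabla f_t(x)\|\le G_f$ for all $x\in R\mathbb{B}$ and all $t\in[T]$; (A3) there is $G_g>0$ with $\|s\|\le G_g$ for all $s\in\partial g(x)$ and all $x\in R\mathbb{B}$; (A4) there are $\sigma,\epsilon>0$ such that $\mathcal{X}'=\{x:g(x)=-\epsilon\}$ is nonempty and $\|s\|\ge\sigma$ for all $s\in\partial g(x)$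 and all $x\in\mathcal{X}'$. Algorithm (OGD with Polyak feasibility steps). Inputs are $x_1\in\mathbb{R}^d$, $\eta>0$ and $\rho\ge0$. For $t=1,\dots,T$: - play $x_t$ and then receive $f_t$; the functions may be chosen adversarially and may depend on past actions; - query $g_t=g(x_t)$ and some $s_t\in\partial g(x_t)$; - set $y_t=x_t-\eta\nabla f_t(x_t)$; - if $s_t\ne0$, set $x_{t+1}=\Pi_{R\mathbb{B}}\big(y_t-\frac{[g_t+s_t^\top(y_t-x_t)+\rho]_+}{\|s_t\|^2}s_t\big)$; if $s_t=0$, set $x_{t+1}=\Pi_{R\mathbb{B}}(y_t)$. Regret is $\mathrm{Reg}_T=\sum_{t=1}^Tf_t(x_t)-\min_{x\in\mathcal{X}}\sum_{t=1}^Tf_t(x)$. Also $\gamma=1-\sigma^2/G_g^2$ and $\xi=1-\sqrt{\gamma}$. *)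

theory Defs
  imports "HOL-Analysis.Analysis"
begin

definition subdiff :: "('a::real_inner \<Rightarrow> real) \<Rightarrow> 'a \<Rightarrow> 'a set" where
  "subdiff g x = {s. \<forall>y. g y \<ge> g x + inner s (y - x)}"

text \<open>One step of OGD with Polyak feasibility steps: from the current point xt,
  gradient gr = grad f_t(xt), subgradient st of g at xt, returns x_{t+1}.
  Projection onto R*B is the Euclidean projection closest_point (cball 0 R).\<close>
definition polyak_step ::
  "real \<Rightarrow> ('a::euclidean_space \<Rightarrow> real) \<Rightarrow> real \<Rightarrow> real \<Rightarrow> 'a \<Rightarrow> 'a \<Rightarrow> 'a \<Rightarrow> 'a" where
  "polyak_step R g eta rho gr st xt =
     (let y = xt - eta *\<^sub>R gr in
      if st \<noteq> 0
      then closest_point (cball 0 R)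
             (y - (max (g xt + inner st (y - xt) + rho) 0 / (norm st)^2) *\<^sub>R st)
      else closest_point (cball 0 R) y)"

definition regret :: "nat \<Rightarrow> (nat \<Rightarrow> 'a \<Rightarrow> real) \<Rightarrow> ('a \<Rightarrow> real) \<Rightarrow> (nat \<Rightarrow> 'a) \<Rightarrow> real" where
  "regret T f g x = (\<Sum>t=1..T. f t (x t)) - (INF u\<in>{u. g u \<le> 0}. \<Sum>t=1..T. f t u)"

end

theory Submission
  imports Defs
begin

lemma conv_tangent:
  fixes f :: "'a::euclidean_space \<Rightarrow> real"
  assumes cf: "convex_on UNIV f" and df: "(f has_derivative (\<lambda>h. inner D h)) (at u)"
  shows "f w \<ge> f u + inner D (w - u)"
proof -
  define \<phi> where "\<phi> = (\<lambda>\<tau>::real. f (u + \<tau> *\<^sub>R (w - u)))"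
  have c\<phi>: "convex_on UNIV \<phi>"
  proof (rule convex_onI)
    fix t x y :: real assume t: "0 < t" "t < 1"
    have "\<phi> ((1 - t) * x + t * y) = f ((1 - t) *\<^sub>R (u + x *\<^sub>R (w - u)) + t *\<^sub>R (u + y *\<^sub>R (w - u)))"
      unfolding \<phi>_def by (simp add: algebra_simps)
    also have "\<dots> \<le> (1 - t) * \<phi> x + t * \<phi> y"
      unfolding \<phi>_def using t by (intro convex_onD[OF cf]) auto
    finally show "\<phi> ((1 - t) *\<^sub>R x + t *\<^sub>R y) \<le> (1 - t) * \<phi> x + t * \<phi> y" by simp
  qed simp
  have d1: "((\<lambda>\<tau>::real. u + \<tau> *\<^sub>R (w - u)) has_derivative (\<lambda>h. h *\<^sub>R (w - u))) (at 0)"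
    by (auto intro!: derivative_eq_intros)
  have df0: "(f has_derivative (\<lambda>h. inner D h)) (at (u + 0 *\<^sub>R (w - u)))" using df by simp
  have "(\<phi> has_derivative (\<lambda>h. inner D (h *\<^sub>R (w - u)))) (at 0)"
    unfolding \<phi>_def using has_derivative_compose[OF d1 df0] by (simp add: o_def)
  then have "(\<phi> has_field_derivative inner D (w - u)) (at 0)"
    by (simp add: has_field_derivative_def mult.commute[of _ "inner D (w - u)"])
  then have "\<phi> 1 - \<phi> 0 \<ge> inner D (w - u) * (1 - 0)"
    by (intro convex_on_imp_above_tangent[OF c\<phi>]) auto
  then show ?thesis unfolding \<phi>_def by simp
qed

lemma convex_sublevel_set:
  assumes "convex_on UNIV (g::'a::real_vector \<Rightarrow> real)"
  shows "convex {u. g u \<le> b}"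
  unfolding convex_def
proof (clarsimp)
  fix x y :: 'a and u v :: real
  assume h: "g x \<le> b" "g y \<le> b" "0 \<le> u" "0 \<le> v" "u + v = 1"
  have "g ((1 - v) *\<^sub>R x + v *\<^sub>R y) \<le> (1 - v) * g x + v * g y"
    using h by (intro convex_onD[OF assms]) auto
  also have "\<dots> \<le> (1 - v) * b + v * b"
    using h by (intro add_mono mult_left_mono) auto
  finally have "g ((1 - v) *\<^sub>R x + v *\<^sub>R y) \<le> b" by (simp add: algebra_simps)
  moreover have "u = 1 - v" using h by simp
  ultimately show "g (u *\<^sub>R x + v *\<^sub>R y) \<le> b" by simp
qed

lemma normal_subgrad:
  fixes g :: "'a::euclidean_space \<Rightarrow> real"
  assumes conv: "convex_on UNIV g" and ne: "{u. g u \<le> b} \<noteq> {}" and gx: "g x > b"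
  shows "\<exists>q v. g q = b \<and> v \<in> subdiff g q \<and> norm v * norm (x - q) \<le> inner v (x - q)"
proof -
  define C where "C = {u. g u \<le> b}"
  have cont: "continuous_on UNIV g" using convex_on_continuous[OF open_UNIV conv] .
  have clC: "closed C" unfolding C_def by (rule closed_Collect_le[OF cont]) simp
  have cvC: "convex C" unfolding C_def by (rule convex_sublevel_set[OF conv])
  have neC: "C \<noteq> {}" using ne C_def by simp
  define q where "q = closest_point C x"
  have qC: "q \<in> C" unfolding q_def by (rule closest_point_in_set[OF clC neC])
  have dot: "\<And>y. y \<in> C \<Longrightarrow> inner (x - q) (y - q) \<le> 0"
    unfolding q_def by (rule closest_point_dot[OF cvC clC])
  define e where "e = x - q"
  have e0: "e \<noteq> 0" using qC gx unfolding e_def C_def by auto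
  have ee: "inner e e > 0" using e0 by simp
  define E where "E = {z::'a\<times>real. g (fst z) \<le> snd z}"
  define F where "F = {z::'a\<times>real. inner (fst z - q) e > 0 \<and> snd z < b}"
  have cvE: "convex E"
  proof -
    have "E = epigraph UNIV g" unfolding E_def epigraph_def by auto
    then show ?thesis using convex_epigraphI[OF conv] by simp
  qed
  have cvF: "convex F"
  proof -
    have "F = {z. inner (e, 0::real) z > inner q e} \<inter> {z. inner (0::'a, 1::real) z < b}"
      unfolding F_def by (auto simp: inner_prod_def inner_diff_left inner_commute[of e])
    then show ?thesis using convex_halfspace_gt convex_halfspace_lt convex_Int by metis
  qed
  have neE: "E \<noteq> {}"
  proof -
    have "(q, g q) \<in> E" unfolding E_def by simp
    then show ?thesis by blast
  qed
  have neF: "F \<noteq> {}"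
  proof -
    have "(x, b - 1) \<in> F" unfolding F_def using ee by (simp add: e_def)
    then show ?thesis by blast
  qed
  have disj: "E \<inter> F = {}"
  proof (rule ccontr)
    assume "E \<inter> F \<noteq> {}"
    then obtain y t where "g y \<le> t" "inner (y - q) e > 0" "t < b" unfolding E_def F_def by auto
    then have "y \<in> C" "inner (x - q) (y - q) > 0" unfolding C_def e_def by (auto simp: inner_commute)
    then show False using dot by fastforce
  qed
  obtain a c where a0: "a \<noteq> 0" and aE: "\<forall>z\<in>E. inner a z \<le> c" and aF: "\<forall>z\<in>F. inner a z \<ge> c"
    using separating_hyperplane_sets[OF cvE cvF neE neF disj] by blast
  obtain w \<beta> where a: "a = (w, \<beta>)" by (cases a)
  have E': "\<And>y t. g y \<le> t \<Longrightarrow> inner w y + \<beta> * t \<le> c"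
    using aE unfolding E_def a by (auto simp: inner_prod_def)
  have F': "\<And>y t. inner (y - q) e > 0 \<Longrightarrow> t < b \<Longrightarrow> inner w y + \<beta> * t \<ge> c"
    using aF unfolding F_def a by (auto simp: inner_prod_def)
  have bneg: "\<beta> < 0"
  proof (rule ccontr)
    assume "\<not> \<beta> < 0"
    then consider "\<beta> > 0" | "\<beta> = 0" by linarith
    then show False
    proof cases
      case 1
      define k where "k = (\<bar>c\<bar> + \<bar>inner w q\<bar> + \<bar>\<beta> * g q\<bar> + 1) / \<beta>"
      have k0: "k \<ge> 0" using 1 unfolding k_def by simp
      have "inner w q + \<beta> * (g q + k) \<le> c" by (rule E') (simp add: k0)
      moreover have "\<beta> * k = \<bar>c\<bar> + \<bar>inner w q\<bar> + \<bar>\<beta> * g q\<bar> + 1" using 1 unfolding k_def by simp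
      ultimately show False by (simp add: algebra_simps)
    next
      case 2
      then have w0: "w \<noteq> 0" using a0 a by (auto simp: zero_prod_def)
      define y where "y = ((\<bar>c\<bar> + 1) / inner w w) *\<^sub>R w"
      have "inner w y + \<beta> * g y \<le> c" by (rule E') simp
      moreover have "inner w y = \<bar>c\<bar> + 1" using w0 unfolding y_def by simp
      ultimately show False using 2 by simp
    qed
  qed
  have gqb: "g q \<le> b" using qC C_def by simp
  have cle: "c \<le> inner w q + \<beta> * b"
  proof (rule ccontr)
    assume nc: "\<not> c \<le> inner w q + \<beta> * b"
    define \<delta> where "\<delta> = c - (inner w q + \<beta> * b)"
    have d0: "\<delta> > 0" using nc \<delta>_def by simp
    define s where "s = \<delta> / (2 * (\<bar>inner w e\<bar> + \<bar>\<beta>\<bar> + 1))"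
    have s0: "s > 0" using d0 s_def by (simp add: add_pos_nonneg)
    have "inner (q + s *\<^sub>R e - q) e > 0" using s0 ee by simp
    then have "inner w (q + s *\<^sub>R e) + \<beta> * (b - s) \<ge> c" by (rule F') (use s0 in simp)
    then have h: "inner w q + \<beta> * b + s * (inner w e - \<beta>) \<ge> c" by (simp add: inner_add_right algebra_simps)
    have "s * (inner w e - \<beta>) \<le> s * (\<bar>inner w e\<bar> + \<bar>\<beta>\<bar> + 1)"
      using s0 by (intro mult_left_mono) auto
    also have "\<dots> = \<delta> / 2" unfolding s_def by (simp add: field_simps add_pos_nonneg)
    finally show False using h d0 \<delta>_def by linarith
  qed
  define v where "v = (- 1 / \<beta>) *\<^sub>R w"
  have sub: "\<And>y. g y \<ge> b + inner v (y - q)"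
  proof -
    fix y
    have "inner w y + \<beta> * g y \<le> inner w q + \<beta> * b" using E'[of y "g y"] cle by simp
    then have "\<beta> * (g y - b) \<le> - inner w (y - q)" by (simp add: algebra_simps inner_diff_right)
    then have "g y - b \<ge> - inner w (y - q) / \<beta>" using bneg by (simp add: field_simps)
    then show "g y \<ge> b + inner v (y - q)" unfolding v_def by (simp add: field_simps)
  qed
  have gq: "g q = b" using sub[of q] gqb by simp
  have vsub: "v \<in> subdiff g q" unfolding subdiff_def using sub gq by simp
  have pos: "\<And>d. inner d e > 0 \<Longrightarrow> inner v d \<ge> 0"
  proof -
    fix d assume dpos: "inner d e > 0"
    show "inner v d \<ge> 0"
    proof (rule ccontr)
      assume "\<not> ?thesis"
      then have wd: "inner w d < 0" unfolding v_def using bneg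
        by (simp add: field_simps)
      define t where "t = b - inner w d / (2 * \<beta>)"
      have t: "t < b" using wd bneg t_def by (simp add: divide_neg_neg)
      have "inner (q + d - q) e > 0" using dpos by simp
      then have "inner w (q + d) + \<beta> * t \<ge> c" by (rule F') (rule t)
      moreover have "inner w q + \<beta> * b \<le> c" using E'[of q b] gqb by simp
      ultimately have "inner w d + \<beta> * (t - b) \<ge> 0" by (simp add: inner_add_right algebra_simps)
      moreover have "\<beta> * (t - b) = - inner w d / 2" using bneg t_def by simp
      ultimately show False using wd by simp
    qed
  qed
  have cs: "norm v * norm e \<le> inner v e"
  proof (rule ccontr)
    assume nc: "\<not> ?thesis"
    then have v0: "v \<noteq> 0" by auto
    define d where "d = norm v *\<^sub>R e - norm e *\<^sub>R v"
    have "inner d e = norm e * (norm v * norm e - inner v e)"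
      unfolding d_def by (simp add: inner_diff_left power2_norm_eq_inner[symmetric] power2_eq_square algebra_simps)
    also have "\<dots> > 0" using nc e0 by simp
    finally have "inner v d \<ge> 0" by (rule pos)
    moreover have "inner v d = norm v * (inner v e - norm v * norm e)"
      unfolding d_def by (simp add: inner_diff_right power2_norm_eq_inner[symmetric] power2_eq_square algebra_simps)
    moreover have "\<dots> < 0" using nc v0 by (simp add: mult_pos_neg)
    ultimately show False by simp
  qed
  show ?thesis using gq vsub cs unfolding e_def by blast
qed

lemma sharp_level:
  fixes g :: "'a::euclidean_space \<Rightarrow> real"
  assumes conv: "convex_on UNIV g" and ne: "{u. g u \<le> b} \<noteq> {}"
    and nv: "\<And>u v. g u = b \<Longrightarrow> v \<in> subdiff g u \<Longrightarrow> norm v \<ge> \<sigma>"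
    and ba: "b \<le> a" and ax: "a \<le> g x"
  shows "\<exists>w. g w \<le> a \<and> \<sigma> * norm (x - w) \<le> g x - a"
proof (cases "g x \<le> b")
  case True
  then show ?thesis using ba ax by (intro exI[of _ x]) auto
next
  case False
  then obtain q v where gq: "g q = b" and vs: "v \<in> subdiff g q"
    and cs: "norm v * norm (x - q) \<le> inner v (x - q)"
    using normal_subgrad[OF conv ne] by force
  have "\<sigma> \<le> norm v" using nv gq vs by blast
  then have "\<sigma> * norm (x - q) \<le> norm v * norm (x - q)" by (simp add: mult_right_mono)
  moreover have "g x \<ge> g q + inner v (x - q)" using vs unfolding subdiff_def by simp
  ultimately have key: "\<sigma> * norm (x - q) \<le> g x - b" using cs gq by linarith
  define \<theta> where "\<theta> = (g x - a) / (g x - b)"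
  have th0: "0 \<le> \<theta>" "\<theta> \<le> 1" using False ba ax unfolding \<theta>_def by auto
  define w where "w = (1 - \<theta>) *\<^sub>R x + \<theta> *\<^sub>R q"
  have "g w \<le> (1 - \<theta>) * g x + \<theta> * g q" unfolding w_def
    by (rule convex_onD[OF conv]) (use th0 in auto)
  also have "\<dots> = g x - \<theta> * (g x - b)" using gq by (simp add: algebra_simps)
  also have "\<dots> = a" using False unfolding \<theta>_def by simp
  finally have gw: "g w \<le> a" .
  have "x - w = \<theta> *\<^sub>R (x - q)" unfolding w_def by (simp add: algebra_simps)
  then have "\<sigma> * norm (x - w) = \<theta> * (\<sigma> * norm (x - q))" using th0 by simp
  also have "\<dots> \<le> \<theta> * (g x - b)" using key th0 by (simp add: mult_left_mono)
  also have "\<dots> = g x - a" using False unfolding \<theta>_def by simp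
  finally show ?thesis using gw by blast
qed

lemma max0_mono_sq: "(max (a::real) 0 - max b 0)^2 \<le> (max a 0 - max b 0) * (a - b)"
proof (cases "a \<ge> 0"; cases "b \<ge> 0")
  assume "a \<ge> 0" "b \<ge> 0" then show ?thesis by (simp add: power2_eq_square)
next
  assume h: "a \<ge> 0" "\<not> b \<ge> 0"
  then have "a * b \<le> 0" by (simp add: mult_nonneg_nonpos)
  then show ?thesis using h by (simp add: power2_eq_square algebra_simps)
next
  assume h: "\<not> a \<ge> 0" "b \<ge> 0"
  then have "a * b \<le> 0" by (simp add: mult_nonpos_nonneg)
  then show ?thesis using h by (simp add: power2_eq_square algebra_simps)
next
  assume "\<not> a \<ge> 0" "\<not> b \<ge> 0" then show ?thesis by (simp add: power2_eq_square)
qed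

lemma hp_nonexp:
  fixes s :: "'a::real_inner"
  assumes s0: "s \<noteq> 0"
  shows "norm ((y1 - (max (k + inner s (y1 - x) + r) 0 / (norm s)^2) *\<^sub>R s)
             - (y2 - (max (k + inner s (y2 - x) + r) 0 / (norm s)^2) *\<^sub>R s)) \<le> norm (y1 - y2)"
proof -
  define h1 where "h1 = k + inner s (y1 - x) + r"
  define h2 where "h2 = k + inner s (y2 - x) + r"
  define m where "m = max h1 0 - max h2 0"
  define n where "n = (norm s)^2"
  have n0: "n > 0" using s0 n_def by simp
  have hd: "h1 - h2 = inner s (y1 - y2)" unfolding h1_def h2_def by (simp add: inner_diff_right)
  have mm: "m^2 \<le> m * (h1 - h2)" unfolding m_def by (rule max0_mono_sq)
  have vec: "(y1 - (max h1 0 / n) *\<^sub>R s) - (y2 - (max h2 0 / n) *\<^sub>R s) = (y1 - y2) - (m / n) *\<^sub>R s"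
    unfolding m_def by (simp add: algebra_simps diff_divide_distrib)
  have ss: "inner s s = n" unfolding n_def by (simp add: power2_norm_eq_inner)
  have "inner ((y1 - y2) - (m / n) *\<^sub>R s) ((y1 - y2) - (m / n) *\<^sub>R s)
        = inner (y1 - y2) (y1 - y2) - 2 * (m / n) * (h1 - h2) + (m / n)^2 * n"
    using n0 unfolding hd by (simp add: inner_diff_left inner_diff_right ss inner_commute power2_eq_square algebra_simps) (simp add: field_simps)
  also have "\<dots> = inner (y1 - y2) (y1 - y2) - (2 * m * (h1 - h2) - m^2) / n"
    using n0 by (simp add: field_simps power2_eq_square)
  also have "\<dots> \<le> inner (y1 - y2) (y1 - y2)"
  proof -
    have "0 \<le> 2 * (m * (h1 - h2)) - m^2" using mm zero_le_power2[of m] by linarith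
    then have "0 \<le> 2 * m * (h1 - h2) - m^2" by (simp add: algebra_simps)
    then show ?thesis using n0 by (simp add: divide_nonneg_pos)
  qed
  finally show ?thesis unfolding norm_le[symmetric] h1_def[symmetric] h2_def[symmetric] n_def[symmetric] vec .
qed

lemma norm_diff_scale_sq:
  fixes v u :: "'a::real_inner"
  shows "norm (v - c *\<^sub>R u)^2 = norm v ^2 - 2 * c * inner u v + c^2 * norm u ^2"
  unfolding power2_norm_eq_inner
  by (simp add: inner_diff_left inner_diff_right inner_commute power2_eq_square algebra_simps)

lemma polyak_contract:
  fixes s xt c :: "'a::real_inner" and g :: "'a \<Rightarrow> real"
  assumes s0: "s \<noteq> 0" and sub: "g c \<ge> g xt + inner s (c - xt)" and gc: "g c \<le> - \<rho>"
    and ns: "norm s \<le> Gg" and dpos: "g xt + \<rho> > 0"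
    and sr: "\<sigma> * norm (xt - c) \<le> g xt + \<rho>" and sg: "\<sigma> \<ge> 0"
  shows "norm ((xt - (max (g xt + inner s (xt - xt) + \<rho>) 0 / (norm s)^2) *\<^sub>R s) - c)^2
           \<le> (1 - \<sigma>^2 / Gg^2) * norm (xt - c)^2"
proof -
  define \<delta> where "\<delta> = g xt + \<rho>"
  define n where "n = (norm s)^2"
  define r where "r = norm (xt - c)"
  have n0: "n > 0" using s0 n_def by simp
  have Gg0: "Gg > 0" using ns s0 by (meson less_le_trans zero_less_norm_iff)
  have nG: "n \<le> Gg^2" unfolding n_def using ns by (simp add: power_mono)
  have ip: "inner s (xt - c) \<ge> \<delta>" using sub gc unfolding \<delta>_def by (simp add: inner_diff_right)
  have ss: "inner s s = n" unfolding n_def by (simp add: power2_norm_eq_inner)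
  have vec: "(xt - (max (g xt + inner s (xt - xt) + \<rho>) 0 / (norm s)^2) *\<^sub>R s) - c = (xt - c) - (\<delta> / n) *\<^sub>R s"
    using dpos unfolding \<delta>_def n_def by (simp add: algebra_simps)
  have "norm ((xt - c) - (\<delta> / n) *\<^sub>R s)^2 = r^2 - 2 * (\<delta> / n) * inner s (xt - c) + (\<delta> / n)^2 * n"
    unfolding r_def power2_norm_eq_inner
    using n0 by (simp add: inner_diff_left inner_diff_right ss inner_commute power2_eq_square algebra_simps) (simp add: field_simps)
  also have "\<dots> \<le> r^2 - 2 * (\<delta> / n) * \<delta> + (\<delta> / n)^2 * n"
  proof -
    have "0 \<le> 2 * (\<delta> / n)" using dpos n0 unfolding \<delta>_def by simp
    then have "2 * (\<delta> / n) * \<delta> \<le> 2 * (\<delta> / n) * inner s (xt - c)" by (rule mult_left_mono[OF ip])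
    then show ?thesis by linarith
  qed
  also have "\<dots> = r^2 - \<delta>^2 / n" using n0 by (simp add: field_simps power2_eq_square)
  also have "\<dots> \<le> r^2 - \<delta>^2 / Gg^2"
    using nG n0 by (simp add: frac_le)
  also have "\<dots> \<le> r^2 - (\<sigma> * r)^2 / Gg^2"
  proof -
    have "\<sigma> * r \<ge> 0" using sg r_def by simp
    then have "(\<sigma> * r)^2 \<le> \<delta>^2" using sr unfolding r_def \<delta>_def by (simp add: power_mono)
    then show ?thesis by (simp add: divide_right_mono)
  qed
  also have "\<dots> = (1 - \<sigma>^2 / Gg^2) * r^2" using Gg0 by (simp add: field_simps power2_eq_square)
  finally show ?thesis unfolding vec r_def .
qed

theorem corollary1:
  fixes g :: "'a::euclidean_space \<Rightarrow> real"
    and f :: "nat \<Rightarrow> 'a \<Rightarrow> real"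
    and df :: "nat \<Rightarrow> 'a \<Rightarrow> 'a"
    and x s :: "nat \<Rightarrow> 'a"
    and T :: nat
    and R G_f G_g \<sigma> \<epsilon> \<alpha> \<rho> \<eta> \<gamma> \<xi> :: real
  assumes T_pos: "T \<ge> 1"
    and g_convex: "convex_on UNIV g"
    and A1: "R > 0" "{u. g u \<le> 0} \<subseteq> cball 0 R"
    and A2_convex: "\<And>t. convex_on UNIV (f t)"
    and A2_grad: "\<And>t u. (f t has_derivative (\<lambda>h. inner (df t u) h)) (at u)"
    and A2_bound: "G_f > 0" "\<And>t u. t \<in> {1..T} \<Longrightarrow> u \<in> cball 0 R \<Longrightarrow> norm (df t u) \<le> G_f"
    and A3: "G_g > 0" "\<And>u v. u \<in> cball 0 R \<Longrightarrow> v \<in> subdiff g u \<Longrightarrow> norm v \<le> G_g"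
    and A4: "\<sigma> > 0" "\<epsilon> > 0" "{u. g u = - \<epsilon>} \<noteq> {}"
            "\<And>u v. g u = - \<epsilon> \<Longrightarrow> v \<in> subdiff g u \<Longrightarrow> norm v \<ge> \<sigma>"
    and gamma_def: "\<gamma> = 1 - \<sigma>^2 / G_g^2"
    and xi_def: "\<xi> = 1 - sqrt \<gamma>"
    and alpha: "0 < \<alpha>" "\<alpha> \<le> \<epsilon>"
    and init: "g (x 1) \<le> - \<alpha>"
    and rho_def: "\<rho> = \<alpha> / sqrt (real T)"
    and eta_def: "\<eta> = \<xi> * \<rho> / (G_f * G_g)"
    and subgr: "\<And>t. t \<in> {1..T} \<Longrightarrow> s t \<in> subdiff g (x t)"
    and step: "\<And>t. t \<in> {1..T} \<Longrightarrow>
                 x (t + 1) = polyak_step R g \<eta> \<rho> (df t (x t)) (s t) (x t)"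
  shows "regret T f g x
           \<le> (2 * G_f * G_g * R^2 / (\<xi> * \<alpha>) + G_f * \<xi> * \<alpha> / (2 * G_g)
               + G_f * \<alpha> / \<sigma>) * sqrt (real T)
         \<and> (\<forall>t\<in>{1..T}. g (x t) \<le> 0)"
proof -
  have T1: "real T \<ge> 1" using T_pos by simp
  define rT where "rT = sqrt (real T)"
  have rT1: "rT \<ge> 1" unfolding rT_def using T1 by simp
  have rT2: "rT^2 = real T" unfolding rT_def by simp
  have rho0: "\<rho> > 0" using alpha rT1 rho_def rT_def by simp
  have rho_le: "\<rho> \<le> \<alpha>" using alpha rT1 rho_def rT_def by (simp add: divide_le_eq)
  have neE: "{u. g u \<le> - \<epsilon>} \<noteq> {}"
  proof -
    from A4(3) obtain u where "g u = - \<epsilon>" by auto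
    then show ?thesis by (metis (mono_tags) empty_iff mem_Collect_eq order_refl)
  qed
  have nv: "\<And>u v. g u = - \<epsilon> \<Longrightarrow> v \<in> subdiff g u \<Longrightarrow> norm v \<ge> \<sigma>" using A4(4) by blast
  obtain b0 :: 'a where b0: "b0 \<in> Basis" using nonempty_Basis by blast
  define x0 where "x0 = (R + 1) *\<^sub>R b0"
  have "norm x0 = R + 1" unfolding x0_def using b0 A1(1) by simp
  then have "x0 \<notin> cball 0 R" by simp
  then have "g x0 > - \<epsilon>" using A1(2) A4(2) by force
  then obtain q v where gq: "g q = - \<epsilon>" and vs: "v \<in> subdiff g q"
    using normal_subgrad[OF g_convex neE] by blast
  have "q \<in> cball 0 R" using A1(2) gq A4(2) by force
  then have sigG: "\<sigma> \<le> G_g" using A3(2)[OF _ vs] nv[OF gq vs] by linarith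
  have gam0: "0 \<le> \<gamma>" unfolding gamma_def using sigG A4(1) A3(1)
    by (simp add: field_simps power_mono)
  have gam1: "\<gamma> < 1" unfolding gamma_def using A4(1) A3(1) by simp
  have sg0: "0 \<le> sqrt \<gamma>" using gam0 by simp
  have sg1: "sqrt \<gamma> < 1" using gam1 gam0 by simp
  have xi0: "\<xi> > 0" "\<xi> \<le> 1" using sg0 sg1 xi_def by auto
  have eta0: "\<eta> > 0" using xi0 rho0 A2_bound(1) A3(1) eta_def by simp
  have etaG: "\<eta> * G_f = \<xi> * \<rho> / G_g" using eta_def A2_bound(1) by simp
  define C where "C = {u. g u \<le> - \<rho>}"
  have cont: "continuous_on UNIV g" using convex_on_continuous[OF open_UNIV g_convex] .
  have clC: "closed C" unfolding C_def by (rule closed_Collect_le[OF cont]) simp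
  have cvC: "convex C" unfolding C_def by (rule convex_sublevel_set[OF g_convex])
  have x1C: "x 1 \<in> C" using init rho_le unfolding C_def by simp
  have neC: "C \<noteq> {}" using x1C by blast
  have CR: "C \<subseteq> cball 0 R" using A1(2) rho0 unfolding C_def by force
  have sharp: "\<And>y. - \<rho> \<le> g y \<Longrightarrow> \<exists>w. g w \<le> - \<rho> \<and> \<sigma> * norm (y - w) \<le> g y + \<rho>"
  proof -
    fix y assume "- \<rho> \<le> g y"
    moreover have "- \<epsilon> \<le> - \<rho>" using rho_le alpha by simp
    ultimately show "\<exists>w. g w \<le> - \<rho> \<and> \<sigma> * norm (y - w) \<le> g y + \<rho>"
      using sharp_level[OF g_convex neE nv, where a="- \<rho>" and x=y] by auto
  qed
  define cp where "cp = closest_point C"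
  have cpC: "\<And>y. cp y \<in> C" unfolding cp_def by (rule closest_point_in_set[OF clC neC])
  have cple: "\<And>y c. c \<in> C \<Longrightarrow> norm (y - cp y) \<le> norm (y - c)"
    unfolding cp_def using closest_point_le[OF clC] by (simp add: dist_norm)
  define D where "D = \<rho> / G_g"
  have D0: "D > 0" using rho0 A3(1) D_def by simp
  define Pi where "Pi = closest_point (cball (0::'a) R)"
  have PiR: "\<And>z. Pi z \<in> cball 0 R" unfolding Pi_def using A1(1)
    by (intro closest_point_in_set) auto
  have Pilip: "\<And>y z. norm (Pi y - Pi z) \<le> norm (y - z)"
    unfolding Pi_def using closest_point_lipschitz[of "cball (0::'a) R"] A1(1) by (auto simp: dist_norm)
  have Piself: "\<And>z. z \<in> cball 0 R \<Longrightarrow> Pi z = z" unfolding Pi_def by (rule closest_point_self)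
  define hp where "hp = (\<lambda>t y. y - (max (g (x t) + inner (s t) (y - x t) + \<rho>) 0 / (norm (s t))^2) *\<^sub>R s t)"
  have xstep: "\<And>t. t \<in> {1..T} \<Longrightarrow> x (t + 1) = Pi (if s t \<noteq> 0 then hp t (x t - \<eta> *\<^sub>R df t (x t)) else x t - \<eta> *\<^sub>R df t (x t))"
    using step unfolding polyak_step_def Let_def Pi_def hp_def by simp
  have onestep: "x (t + 1) \<in> cball 0 R \<and> norm (x (t + 1) - cp (x (t + 1))) \<le> D"
    if t: "t \<in> {1..T}" and xR: "x t \<in> cball 0 R" and xD: "norm (x t - cp (x t)) \<le> D" for t
  proof -
    define xt where "xt = x t"
    define y where "y = xt - \<eta> *\<^sub>R df t xt"
    define z where "z = (if s t \<noteq> 0 then hp t y else y)"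
    have xe: "x (t + 1) = Pi z" using xstep[OF t] unfolding z_def y_def xt_def by simp
    have sub: "\<And>u. g u \<ge> g xt + inner (s t) (u - xt)" using subgr[OF t] unfolding subdiff_def xt_def by simp
    have ns: "norm (s t) \<le> G_g" using A3(2)[OF xR subgr[OF t]] .
    have ng: "norm (df t xt) \<le> G_f" using A2_bound(2)[OF t xR] unfolding xt_def .
    have yx: "norm (y - xt) \<le> \<xi> * \<rho> / G_g"
    proof -
      have "norm (y - xt) = \<eta> * norm (df t xt)" unfolding y_def using eta0 by simp
      also have "\<dots> \<le> \<eta> * G_f" using ng eta0 by (simp add: mult_left_mono)
      finally show ?thesis using etaG by simp
    qed
    have zD: "norm (z - cp z) \<le> D"
    proof (cases "s t = 0")
      case True
      have "g xt \<le> g (cp xt)" using sub[of "cp xt"] True by simp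
      then have "xt \<in> C" using cpC[of xt] unfolding C_def by auto
      have "norm (z - cp z) \<le> norm (z - xt)" by (rule cple) fact
      also have "\<dots> \<le> \<xi> * \<rho> / G_g" using True yx z_def by simp
      also have "\<dots> \<le> D" unfolding D_def using xi0 rho0 A3(1) by (simp add: divide_right_mono)
      finally show ?thesis .
    next
      case False
      define px where "px = hp t xt"
      have "norm (hp t y - hp t xt) \<le> norm (y - xt)" unfolding hp_def using hp_nonexp[OF False] by blast
      then have zpx: "norm (z - px) \<le> \<xi> * \<rho> / G_g" using yx False z_def px_def by simp
      have pxD: "norm (px - cp px) \<le> sqrt \<gamma> * D"
      proof (cases "g xt + \<rho> \<le> 0")
        case True
        then have "px = xt" unfolding px_def hp_def xt_def by simp
        moreover have "xt \<in> C" using True unfolding C_def by simp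
        ultimately have "norm (px - cp px) \<le> 0" using cple[of xt xt] by simp
        then show ?thesis using sg0 D0 by (smt (verit) mult_nonneg_nonneg)
      next
        case gpos: False
        define c where "c = cp xt"
        have gc: "g c \<le> - \<rho>" using cpC[of xt] unfolding c_def C_def by simp
        obtain w where gw: "g w \<le> - \<rho>" and sw: "\<sigma> * norm (xt - w) \<le> g xt + \<rho>"
          using sharp[of xt] gpos by force
        have "norm (xt - c) \<le> norm (xt - w)" unfolding c_def by (rule cple) (use gw C_def in simp)
        then have sr: "\<sigma> * norm (xt - c) \<le> g xt + \<rho>" using sw A4(1)
          by (smt (verit) mult_left_mono)
        have gpos': "0 < g xt + \<rho>" using gpos by simp
        have "norm (px - c)^2 \<le> \<gamma> * norm (xt - c)^2"
          using polyak_contract[OF False sub[of c] gc ns gpos' sr] A4(1)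
          unfolding px_def hp_def gamma_def xt_def by simp
        then have "norm (px - c) \<le> sqrt (\<gamma> * norm (xt - c)^2)" using real_le_rsqrt by blast
        also have "\<dots> = sqrt \<gamma> * norm (xt - c)" by (simp add: real_sqrt_mult)
        also have "\<dots> \<le> sqrt \<gamma> * D" using xD sg0 unfolding c_def xt_def by (simp add: mult_left_mono)
        finally have "norm (px - c) \<le> sqrt \<gamma> * D" .
        moreover have "norm (px - cp px) \<le> norm (px - c)" by (rule cple) (use cpC c_def in simp)
        ultimately show ?thesis by simp
      qed
      have "norm (z - cp z) \<le> norm (z - cp px)" by (rule cple[OF cpC])
      also have "\<dots> \<le> norm (z - px) + norm (px - cp px)" using norm_triangle_ineq[of "z - px" "px - cp px"] by simp
      also have "\<dots> \<le> \<xi> * \<rho> / G_g + sqrt \<gamma> * D" using zpx pxD by simp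
      also have "\<dots> = D" unfolding D_def xi_def using A3(1) by (simp add: field_simps)
      finally show ?thesis .
    qed
    have "norm (x (t + 1) - cp (x (t + 1))) \<le> norm (Pi z - cp z)" unfolding xe by (rule cple[OF cpC])
    also have "\<dots> = norm (Pi z - Pi (cp z))" using Piself[of "cp z"] cpC[of z] CR by auto
    also have "\<dots> \<le> norm (z - cp z)" by (rule Pilip)
    finally show ?thesis using zD xe PiR by simp
  qed
  have inv: "\<And>n. n \<le> T \<Longrightarrow> x (Suc n) \<in> cball 0 R \<and> norm (x (Suc n) - cp (x (Suc n))) \<le> D"
  proof -
    fix n show "n \<le> T \<Longrightarrow> x (Suc n) \<in> cball 0 R \<and> norm (x (Suc n) - cp (x (Suc n))) \<le> D"
    proof (induction n)
      case 0
      have "norm (x 1 - cp (x 1)) \<le> 0" using cple[OF x1C, of "x 1"] by simp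
      then show ?case using x1C CR D0 by auto
    next
      case (Suc n)
      then have "Suc n \<in> {1..T}" by simp
      from onestep[OF this] Suc show ?case by simp
    qed
  qed
  have xRD: "x t \<in> cball 0 R \<and> norm (x t - cp (x t)) \<le> D" if t: "t \<in> {1..T}" for t
  proof -
    have e: "t = Suc (t - 1)" and le: "t - 1 \<le> T" using t by auto
    show ?thesis using inv[OF le] e by simp
  qed
  have xR: "\<And>t. t \<in> {1..T} \<Longrightarrow> x t \<in> cball 0 R" using xRD by blast
  have xD: "\<And>t. t \<in> {1..T} \<Longrightarrow> norm (x t - cp (x t)) \<le> D" using xRD by blast
  have feas: "\<forall>t\<in>{1..T}. g (x t) \<le> 0"
  proof
    fix t assume t: "t \<in> {1..T}"
    define c where "c = cp (x t)"
    have "g c \<ge> g (x t) + inner (s t) (c - x t)" using subgr[OF t] unfolding subdiff_def by simp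
    moreover have "inner (s t) (c - x t) \<ge> - (norm (s t) * norm (c - x t))"
      using Cauchy_Schwarz_ineq2[of "s t" "c - x t"] by (simp add: abs_le_iff)
    moreover have "norm (s t) * norm (c - x t) \<le> G_g * D"
      using A3(2)[OF xR[OF t] subgr[OF t]] xD[OF t] unfolding c_def
      using A3(1) by (intro mult_mono) (auto simp: norm_minus_commute)
    moreover have "G_g * D = \<rho>" unfolding D_def using A3(1) by simp
    moreover have "g c \<le> - \<rho>" using cpC unfolding c_def C_def by simp
    ultimately show "g (x t) \<le> 0" by linarith
  qed
  define B where "B = (2 * G_f * G_g * R^2 / (\<xi> * \<alpha>) + G_f * \<xi> * \<alpha> / (2 * G_g) + G_f * \<alpha> / \<sigma>) * sqrt (real T)"
  have reg_u: "(\<Sum>t=1..T. f t (x t)) - B \<le> (\<Sum>t=1..T. f t u)" if gu: "g u \<le> 0" for u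
  proof -
    obtain w where gw: "g w \<le> - \<rho>" and sw: "\<sigma> * norm (u - w) \<le> \<rho>"
    proof (cases "g u \<le> - \<rho>")
      case True then show ?thesis using that[of u] rho0 by simp
    next
      case False
      then obtain w where "g w \<le> - \<rho>" "\<sigma> * norm (u - w) \<le> g u + \<rho>" using sharp[of u] by force
      then show ?thesis using that[of w] gu by simp
    qed
    have wR: "w \<in> cball 0 R" using CR gw C_def by blast
    have uR: "u \<in> cball 0 R" using A1(2) gu by blast
    define a where "a = (\<lambda>t. norm (x t - w)^2)"
    have per: "f t (x t) - f t u \<le> (a t - a (t + 1)) / (2 * \<eta>) + \<eta> * G_f^2 / 2 + G_f * \<rho> / \<sigma>"
      if t: "t \<in> {1..T}" for t
    proof -
      define gr where "gr = df t (x t)"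
      define y where "y = x t - \<eta> *\<^sub>R gr"
      have ng: "norm gr \<le> G_f" using A2_bound(2)[OF t xR[OF t]] unfolding gr_def .
      have stepw: "norm (x (t + 1) - w) \<le> norm (y - w)"
      proof (cases "s t = 0")
        case True
        then have "x (t + 1) = Pi y" using xstep[OF t] unfolding y_def gr_def by simp
        then show ?thesis using Pilip[of y w] Piself[OF wR] by simp
      next
        case False
        have hw: "hp t w = w"
        proof -
          have "g w \<ge> g (x t) + inner (s t) (w - x t)" using subgr[OF t] unfolding subdiff_def by simp
          then have "g (x t) + inner (s t) (w - x t) + \<rho> \<le> 0" using gw by simp
          then show ?thesis unfolding hp_def by simp
        qed
        have "norm (hp t y - hp t w) \<le> norm (y - w)" unfolding hp_def using hp_nonexp[OF False] by blast
        moreover have "x (t + 1) = Pi (hp t y)" using xstep[OF t] False unfolding y_def gr_def by simp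
        ultimately show ?thesis using Pilip[of "hp t y" w] Piself[OF wR] hw by simp
      qed
      have "a (t + 1) \<le> norm (y - w)^2" unfolding a_def using stepw by (simp add: power_mono)
      also have "norm (y - w)^2 = a t - 2 * \<eta> * inner gr (x t - w) + \<eta>^2 * norm gr ^2"
      proof -
        have "y - w = (x t - w) - \<eta> *\<^sub>R gr" unfolding y_def by (simp add: algebra_simps)
        then have "norm (y - w)^2 = norm ((x t - w) - \<eta> *\<^sub>R gr)^2" by (simp only:)
        also have "\<dots> = a t - 2 * \<eta> * inner gr (x t - w) + \<eta>^2 * norm gr ^2"
          unfolding a_def by (rule norm_diff_scale_sq)
        finally show ?thesis .
      qed
      also have "\<dots> \<le> a t - 2 * \<eta> * inner gr (x t - w) + \<eta>^2 * G_f^2"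
        using ng by (simp add: power_mono mult_left_mono)
      finally have "2 * \<eta> * inner gr (x t - w) \<le> a t - a (t + 1) + \<eta>^2 * G_f^2" by simp
      then have i1: "inner gr (x t - w) \<le> (a t - a (t + 1)) / (2 * \<eta>) + \<eta> * G_f^2 / 2"
        using eta0 by (simp add: field_simps power2_eq_square)
      have "f t w \<ge> f t (x t) + inner gr (w - x t)" unfolding gr_def by (rule conv_tangent[OF A2_convex A2_grad])
      then have i2: "f t (x t) - f t w \<le> inner gr (x t - w)"
        by (simp add: inner_diff_right)
      have "f t u \<ge> f t w + inner (df t w) (u - w)" by (rule conv_tangent[OF A2_convex A2_grad])
      moreover have "\<bar>inner (df t w) (u - w)\<bar> \<le> norm (df t w) * norm (u - w)" by (rule Cauchy_Schwarz_ineq2)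
      moreover have "norm (df t w) * norm (u - w) \<le> G_f * (\<rho> / \<sigma>)"
        using A2_bound(2)[OF t wR] sw A4(1) A2_bound(1) by (intro mult_mono) (auto simp: field_simps)
      ultimately have i3: "f t w - f t u \<le> G_f * \<rho> / \<sigma>" by (simp add: abs_le_iff)
      show ?thesis using i1 i2 i3 by simp
    qed
    have "(\<Sum>t=1..T. f t (x t) - f t u) \<le> (\<Sum>t=1..T. (a t - a (t + 1)) / (2 * \<eta>) + (\<eta> * G_f^2 / 2 + G_f * \<rho> / \<sigma>))"
      using per by (intro sum_mono) (simp add: add.assoc)
    also have "\<dots> = (a 1 - a (T + 1)) / (2 * \<eta>) + real T * (\<eta> * G_f^2 / 2 + G_f * \<rho> / \<sigma>)"
    proof -
      have "(\<Sum>t=1..T. a t - a (t + 1)) = a 1 - a (Suc T)"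
      proof -
        have "(\<Sum>t=1..T. a t - a (t + 1)) = - (\<Sum>t=1..T. a (Suc t) - a t)"
          by (simp add: sum_negf[symmetric])
        also have "\<dots> = a 1 - a (Suc T)" using sum_Suc_diff[of 1 T a] T_pos by simp
        finally show ?thesis .
      qed
      then show ?thesis by (simp add: sum.distrib sum_divide_distrib[symmetric])
    qed
    also have "\<dots> \<le> 4 * R^2 / (2 * \<eta>) + real T * (\<eta> * G_f^2 / 2 + G_f * \<rho> / \<sigma>)"
    proof -
      have "x 1 \<in> cball 0 R" using xR[of 1] T_pos by simp
      then have "norm (x 1 - w) \<le> 2 * R" using norm_triangle_ineq4[of "x 1" w] wR by simp
      then have "a 1 \<le> (2 * R)^2" unfolding a_def by (intro power_mono) auto
      moreover have "a (T + 1) \<ge> 0" unfolding a_def by simp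
      ultimately have "a 1 - a (T + 1) \<le> 4 * R^2" by (simp add: power2_eq_square)
      then have "(a 1 - a (T + 1)) / (2 * \<eta>) \<le> 4 * R^2 / (2 * \<eta>)"
        using eta0 by (intro divide_right_mono) auto
      then show ?thesis by linarith
    qed
    also have "\<dots> = B"
    proof -
      have rT0: "rT > 0" using rT1 by simp
      have e: "\<eta> = \<xi> * \<alpha> / (rT * G_f * G_g)" unfolding eta_def rho_def rT_def by simp
      have r: "\<rho> = \<alpha> / rT" unfolding rho_def rT_def by simp
      have TT: "real T = rT * rT" using rT2 by (simp add: power2_eq_square)
      have h1: "4 * R^2 / (2 * \<eta>) = 2 * G_f * G_g * R^2 / (\<xi> * \<alpha>) * rT"
        unfolding e using rT0 xi0 alpha A2_bound(1) A3(1) by (simp add: field_simps)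
      have h2: "real T * (\<eta> * G_f^2 / 2) = G_f * \<xi> * \<alpha> / (2 * G_g) * rT"
        unfolding e TT using rT0 xi0 alpha A2_bound(1) A3(1) by (simp add: field_simps power2_eq_square)
      have h3: "real T * (G_f * \<rho> / \<sigma>) = G_f * \<alpha> / \<sigma> * rT"
        unfolding r TT using rT0 A4(1) by (simp add: field_simps)
      show ?thesis unfolding B_def rT_def[symmetric] using h1 h2 h3 by (simp add: algebra_simps)
    qed
    finally show ?thesis by (simp add: sum_subtractf)
  qed
  have "(\<Sum>t=1..T. f t (x t)) - B \<le> (INF u\<in>{u. g u \<le> 0}. \<Sum>t=1..T. f t u)"
  proof (rule cINF_greatest)
    have "x 1 \<in> {u. g u \<le> 0}" using x1C rho0 unfolding C_def by simp
    then show "{u. g u \<le> 0} \<noteq> {}" by blast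
  next
    fix u assume "u \<in> {u. g u \<le> 0}" then show "(\<Sum>t=1..T. f t (x t)) - B \<le> (\<Sum>t=1..T. f t u)"
      using reg_u by simp
  qed
  then have "regret T f g x \<le> B" unfolding regret_def by simp
  then show ?thesis using feas unfolding B_def by simp
qed

end
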